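(* Consider a matched pair study and assume Fisher's null $H_0$ holds. (i) For any $1\le k\le I$ and $\alpha\in(0,1)$, $\{\Gamma_0\in[1,\infty]:\overline p_{\Gamma_0;k}>\alpha\}$ is a $1-\alpha$ confidence set for $\Gamma^\star_{(k)}$, and it equals either $(\hat\Gamma_{(k)},\infty]$ or $[\hat\Gamma_{(k)},\infty]$, where $\hat\Gamma_{(k)}=\inf\{\Gamma_0\ge1:\overline p_{\Gamma_0;k}>\alpha\}$. (ii) For any $\Gamma_0$ and $\alpha\in(0,1)$, $\{I-k:\overline p_{\Gamma_0;k}>\alpha,\ 0\le k\le I\}$ is a $1-\alpha$ confidence set for $I^\star(\Gamma_0)$, and it equals $\{\hat I(\Gamma_0),\hat I(\Gamma_0)+1,\dots,I\}$ with $\hat I(\Gamma_0)=I-\sup\{k:\overline p_{\Gamma_0;k}>\alpha,\ 0\le k\le I\}$.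
   Context: Setting: $I$ matched pairs, potential outcomes fixed, $Z$ (one treated unit per pair) is the only randomness with true mechanism $\mathbb P(Z=z)=\prod_i\prod_j(p^\star_{ij})^{z_{ij}}$, $p^\star_{i1}+p^\star_{i2}=1$; true hidden bias $\Gamma^\star_i=\max_jp^\star_{ij}/\min_kp^\star_{ik}\in[1,\infty]$; $\Gamma^\star_{(k)}$ is its $k$th smallest value, and $I^\star(\Gamma_0)=\#\{i:\Gamma^\star_i>\Gamma_0\}$. Fisher's null $H_0$: $Y_{ij}(1)=Y_{ij}(0)$ for all $i,j$. $T=\sum_i\sum_jZ_{ij}q_{ij}$ with $q_{ij}$ fixed functions of $Y(0)$. Fix an ordering of pairs by nondecreasing $|q_{i1}-q_{i2}|$; $\mathcal I_k$ is the first $k$ pairs. $\overline T(\Gamma_0;k)$ is a sum of independent variables: for $i\in\mathcal I_k$ it equals $\max\{q_{i1},q_{i2}\}$ with probability $\Gamma_0/(1+\Gamma_0)$ and $\min\{q_{i1},q_{i2}\}$ otherwise; for $i\notin\mathcal I_k$ it equals $\max\{q_{i1},q_{i2}\}$ with probability 1. $\overline p_{\Gamma_0;k}=\mathbb P(\overline T(\Gamma_0;k)\ge c)|_{c=T}$ for $1\le k\le I$, and by convention $\overline p_{\Gamma_0;0}=1$. *)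

theory Defs
  imports "HOL-Probability.Probability"
begin

text \<open>Pairs are indexed by 0..<I. For a treatment assignment z :: nat => bool,
  z i = True means unit 1 of pair i is treated (Z_i1 = 1, Z_i2 = 0), z i = False means
  unit 2 is treated. A pair-indexed quantity x_ij is encoded as x i True = x_i1 and
  x i False = x_i2. p i is p*_i1, so p*_i2 = 1 - p i.\<close>

definition Zdist :: "nat \<Rightarrow> (nat \<Rightarrow> real) \<Rightarrow> (nat \<Rightarrow> bool) pmf" where
  "Zdist I p = Pi_pmf {..<I} False (\<lambda>i. bernoulli_pmf (p i))"

definition Tstat :: "nat \<Rightarrow> (nat \<Rightarrow> bool \<Rightarrow> real) \<Rightarrow> (nat \<Rightarrow> bool) \<Rightarrow> real" where
  "Tstat I q z = (\<Sum>i<I. q i (z i))"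

definition gprob :: "ereal \<Rightarrow> real" where
  "gprob \<Gamma>0 = (if \<Gamma>0 = \<infinity> then 1 else real_of_ereal \<Gamma>0 / (1 + real_of_ereal \<Gamma>0))"

text \<open>I_k: the first k pairs in the fixed ordering sigma (sigma j is the (j+1)-th pair).\<close>
definition Ik :: "(nat \<Rightarrow> nat) \<Rightarrow> nat \<Rightarrow> nat set" where
  "Ik \<sigma> k = \<sigma> ` {..<k}"

definition Tbar_dist :: "nat \<Rightarrow> (nat \<Rightarrow> bool \<Rightarrow> real) \<Rightarrow> (nat \<Rightarrow> nat) \<Rightarrow> ereal \<Rightarrow> nat \<Rightarrow> real pmf" where
  "Tbar_dist I q \<sigma> \<Gamma>0 k =
     map_pmf (\<lambda>w. \<Sum>i<I. if w i then max (q i True) (q i False) else min (q i True) (q i False))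
       (Pi_pmf {..<I} False (\<lambda>i. bernoulli_pmf (if i \<in> Ik \<sigma> k then gprob \<Gamma>0 else 1)))"

definition pbar :: "nat \<Rightarrow> (nat \<Rightarrow> bool \<Rightarrow> real) \<Rightarrow> (nat \<Rightarrow> nat) \<Rightarrow> ereal \<Rightarrow> nat \<Rightarrow> real \<Rightarrow> real" where
  "pbar I q \<sigma> \<Gamma>0 k c =
     (if k = 0 then 1 else measure_pmf.prob (Tbar_dist I q \<sigma> \<Gamma>0 k) {t. c \<le> t})"

definition Gamma_star :: "(nat \<Rightarrow> real) \<Rightarrow> nat \<Rightarrow> ereal" where
  "Gamma_star p i =
     (let a = p i; b = 1 - p i in if min a b = 0 then \<infinity> else ereal (max a b / min a b))"

definition Gamma_order :: "nat \<Rightarrow> (nat \<Rightarrow> real) \<Rightarrow> nat \<Rightarrow> ereal" where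
  "Gamma_order I p k = sort (map (Gamma_star p) [0..<I]) ! (k - 1)"

definition Istar :: "nat \<Rightarrow> (nat \<Rightarrow> real) \<Rightarrow> ereal \<Rightarrow> nat" where
  "Istar I p \<Gamma>0 = card {i \<in> {..<I}. \<Gamma>0 < Gamma_star p i}"

definition CS_Gamma :: "nat \<Rightarrow> (nat \<Rightarrow> bool \<Rightarrow> real) \<Rightarrow> (nat \<Rightarrow> nat) \<Rightarrow> real \<Rightarrow> nat \<Rightarrow> (nat \<Rightarrow> bool) \<Rightarrow> ereal set" where
  "CS_Gamma I q \<sigma> \<alpha> k z = {\<Gamma>0. 1 \<le> \<Gamma>0 \<and> pbar I q \<sigma> \<Gamma>0 k (Tstat I q z) > \<alpha>}"

definition Gamma_hat :: "nat \<Rightarrow> (nat \<Rightarrow> bool \<Rightarrow> real) \<Rightarrow> (nat \<Rightarrow> nat) \<Rightarrow> real \<Rightarrow> nat \<Rightarrow> (nat \<Rightarrow> bool) \<Rightarrow> ereal" where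
  "Gamma_hat I q \<sigma> \<alpha> k z = Inf {\<Gamma>0. 1 \<le> \<Gamma>0 \<and> pbar I q \<sigma> \<Gamma>0 k (Tstat I q z) > \<alpha>}"

definition CS_I :: "nat \<Rightarrow> (nat \<Rightarrow> bool \<Rightarrow> real) \<Rightarrow> (nat \<Rightarrow> nat) \<Rightarrow> real \<Rightarrow> ereal \<Rightarrow> (nat \<Rightarrow> bool) \<Rightarrow> nat set" where
  "CS_I I q \<sigma> \<alpha> \<Gamma>0 z = {I - k | k. k \<le> I \<and> pbar I q \<sigma> \<Gamma>0 k (Tstat I q z) > \<alpha>}"

definition I_hat :: "nat \<Rightarrow> (nat \<Rightarrow> bool \<Rightarrow> real) \<Rightarrow> (nat \<Rightarrow> nat) \<Rightarrow> real \<Rightarrow> ereal \<Rightarrow> (nat \<Rightarrow> bool) \<Rightarrow> nat" where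
  "I_hat I q \<sigma> \<alpha> \<Gamma>0 z = I - Sup {k. k \<le> I \<and> pbar I q \<sigma> \<Gamma>0 k (Tstat I q z) > \<alpha>}"

end

theory Submission imports Defs begin

lemma bool_pmf_eqI:
  fixes M N :: "bool pmf"
  assumes "pmf M True = pmf N True"
  shows "M = N"
proof (rule pmf_eqI)
  fix x :: bool
  have sM: "pmf M True + pmf M False = 1"
    using sum_pmf_eq_1[of UNIV M] by (simp add: UNIV_bool add.commute set_pmf_subset_singleton) (auto simp: UNIV_bool[symmetric])
  have sN: "pmf N True + pmf N False = 1"
    using sum_pmf_eq_1[of UNIV N] by (simp add: UNIV_bool add.commute set_pmf_subset_singleton) (auto simp: UNIV_bool[symmetric])
  show "pmf M x = pmf N x" using assms sM sN by (cases x) auto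
qed

definition Kc :: "bool \<Rightarrow> real \<Rightarrow> real \<Rightarrow> (bool \<times> bool) pmf" where
  "Kc h a b = bernoulli_pmf a \<bind> (\<lambda>e. bernoulli_pmf (if a < 1 then (b-a)/(1-a) else 0)
      \<bind> (\<lambda>y. return_pmf (e = h, e \<or> y)))"

lemma rho_range:
  fixes a b :: real
  assumes "0 \<le> a" "a \<le> b" "b \<le> 1"
  shows "0 \<le> (if a < 1 then (b-a)/(1-a) else 0)" "(if a < 1 then (b-a)/(1-a) else 0) \<le> 1"
  using assms by (auto simp: field_simps)

lemma Kc_fst:
  assumes "0 \<le> a" "a \<le> b" "b \<le> 1"
  shows "map_pmf fst (Kc h a b) = bernoulli_pmf (if h then a else 1 - a)"
proof -
  have "map_pmf fst (Kc h a b) = bernoulli_pmf a \<bind> (\<lambda>e. return_pmf (e = h))"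
    unfolding Kc_def by (simp add: map_bind_pmf bind_return_pmf')
  show ?thesis
    apply (rule bool_pmf_eqI)
    unfolding \<open>map_pmf fst (Kc h a b) = _\<close>
    using assms by (simp add: pmf_bind)
qed

lemma Kc_snd:
  assumes "0 \<le> a" "a \<le> b" "b \<le> 1"
  shows "map_pmf snd (Kc h a b) = bernoulli_pmf b"
proof -
  let ?r = "(if a < 1 then (b-a)/(1-a) else 0)"
  have r: "0 \<le> ?r" "?r \<le> 1" using rho_range[OF assms] by auto
  have "map_pmf snd (Kc h a b) = bernoulli_pmf a \<bind> (\<lambda>e. bernoulli_pmf ?r \<bind> (\<lambda>y. return_pmf (e \<or> y)))"
    unfolding Kc_def by (simp add: map_bind_pmf)
  moreover have "pmf (bernoulli_pmf a \<bind> (\<lambda>e. bernoulli_pmf ?r \<bind> (\<lambda>y. return_pmf (e \<or> y)))) True = b"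
  proof -
    have "pmf (bernoulli_pmf a \<bind> (\<lambda>e. bernoulli_pmf ?r \<bind> (\<lambda>y. return_pmf (e \<or> y)))) True
          = a + ?r * (1 - a)"
      using assms r by (simp add: pmf_bind)
    also have "\<dots> = b" using assms by (auto simp: field_simps)
    finally show ?thesis .
  qed
  ultimately show ?thesis using assms by (intro bool_pmf_eqI) simp
qed

lemma Kc_set:
  assumes "(x, y) \<in> set_pmf (Kc h a b)" "x = h"
  shows "y"
  using assms unfolding Kc_def by auto

lemma Kc_set2:
  assumes "(x, y) \<in> set_pmf (Kc h a b)" "0 \<le> a" "a \<le> b" "b = 1"
  shows "y"
proof -
  have "y \<in> set_pmf (map_pmf snd (Kc h a b))" using assms(1) by force
  moreover have "map_pmf snd (Kc h a b) = bernoulli_pmf 1" using Kc_snd[of a b h] assms by simp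
  ultimately have "y \<in> set_pmf (bernoulli_pmf 1)" by simp
  thus ?thesis by (cases y) (auto simp: set_pmf_eq)
qed


lemma Pi_pmf_bij_betw_gen:
  assumes "finite A" "bij_betw h A A" "\<And>x. x \<notin> A \<Longrightarrow> h x \<notin> A"
  shows "Pi_pmf A dflt (\<lambda>x. f (h x)) = map_pmf (\<lambda>g. g \<circ> h) (Pi_pmf A dflt f)"
    (is "?lhs = ?rhs")
proof -
  have B: "finite A" using assms by auto
  have "pmf ?lhs g = pmf ?rhs g" for g
  proof (cases "\<forall>a. a \<notin> A \<longrightarrow> g a = dflt")
    case True
    define h' where "h' = the_inv_into A h"
    have h': "h' (h x) = x" if "x \<in> A" for x
      unfolding h'_def using that assms by (auto simp add: bij_betw_def the_inv_into_f_f)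
    have h: "h (h' x) = x" if "x \<in> A" for x
      unfolding h'_def using that assms f_the_inv_into_f_bij_betw by fastforce
    have "pmf ?rhs g = measure_pmf.prob (Pi_pmf A dflt f) ((\<lambda>g. g \<circ> h) -` {g})"
      unfolding pmf_map by simp
    also have "\<dots> = measure_pmf.prob (Pi_pmf A dflt f)
                                (((\<lambda>g. g \<circ> h) -` {g}) \<inter> PiE_dflt A dflt (\<lambda>_. UNIV))"
      using B by (intro measure_prob_cong_0) (auto simp: PiE_dflt_def pmf_Pi_outside)
    also have "\<dots> = pmf (Pi_pmf A dflt f) (\<lambda>x. if x \<in> A then g (h' x) else dflt)"
    proof -
      have "(if h x \<in> A then g (h' (h x)) else dflt) = g x" for x
        using h' assms True by (cases "x \<in> A") (auto simp add: bij_betwE)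
      then have "(\<lambda>g. g \<circ> h) -` {g} \<inter> PiE_dflt A dflt (\<lambda>_. UNIV) =
            {(\<lambda>x. if x \<in> A then g (h' x) else dflt)}"
        using assms h' h True unfolding PiE_dflt_def by auto
      then show ?thesis
        by (simp add: measure_pmf_single)
    qed
    also have "\<dots> = (\<Prod>x\<in>A. pmf (f x) (g (h' x)))"
      using B by (subst pmf_Pi) auto
    also have "\<dots> = (\<Prod>x\<in>A. pmf (f (h x)) (g (h' (h x))))"
      using assms(2) by (rule prod.reindex_bij_betw[symmetric])
    also have "\<dots> = (\<Prod>x\<in>A. pmf (f (h x)) (g x))"
      using h' by (intro prod.cong) auto
    also have "\<dots> = pmf (Pi_pmf A dflt (\<lambda>x. f (h x))) g"
      using B True by (subst pmf_Pi) auto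
    finally show ?thesis
      by simp
  next
    case False
    have "pmf ?rhs g = infsetsum (pmf (Pi_pmf A dflt f)) ((\<lambda>g. g \<circ> h) -` {g})"
      using assms by (auto simp add: measure_pmf_conv_infsetsum pmf_map)
    also have "\<dots> = infsetsum (\<lambda>_. 0) ((\<lambda>g x. g (h x)) -` {g})"
      using B False assms by (intro infsetsum_cong pmf_Pi_outside) fastforce+
    also have "\<dots> = 0"
      by simp
    finally show ?thesis
      using assms False by (auto simp add: pmf_Pi pmf_map)
  qed
  then show ?thesis
    by (rule pmf_eqI)
qed

lemma dom:
  fixes A :: "nat set" and \<pi> :: "nat \<Rightarrow> nat" and a b :: "nat \<Rightarrow> real" and hs :: "nat \<Rightarrow> bool"
    and F G :: "(nat \<Rightarrow> bool) \<Rightarrow> real"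
  assumes fin: "finite A" and bij: "bij_betw \<pi> A A" and out: "\<And>x. x \<notin> A \<Longrightarrow> \<pi> x \<notin> A"
    and ab: "\<And>i. i \<in> A \<Longrightarrow> 0 \<le> a i \<and> a i \<le> b i \<and> b i \<le> 1"
    and FG: "\<And>x y. (\<forall>i\<in>A. (x i = hs i \<longrightarrow> y i) \<and> (b i = 1 \<longrightarrow> y i)) \<Longrightarrow> F x \<le> G (y \<circ> \<pi>)"
  shows "measure_pmf.prob (Pi_pmf A False (\<lambda>i. bernoulli_pmf (if hs i then a i else 1 - a i))) {x. c \<le> F x}
       \<le> measure_pmf.prob (Pi_pmf A False (\<lambda>j. bernoulli_pmf (b (\<pi> j)))) {y. c \<le> G y}"
proof -
  define K where "K i = Kc (hs i) (a i) (b i)" for i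
  define P where "P = Pi_pmf A (False, False) K"
  have 1: "Pi_pmf A False (\<lambda>i. bernoulli_pmf (if hs i then a i else 1 - a i)) = map_pmf (\<lambda>h. fst \<circ> h) P"
  proof -
    have "Pi_pmf A False (\<lambda>i. bernoulli_pmf (if hs i then a i else 1 - a i)) = Pi_pmf A False (\<lambda>i. map_pmf fst (K i))"
      using ab by (intro Pi_pmf_cong) (auto simp: K_def Kc_fst)
    also have "\<dots> = map_pmf (\<lambda>h. fst \<circ> h) P"
      unfolding P_def by (rule Pi_pmf_map) (auto simp: fin)
    finally show ?thesis .
  qed
  have 2: "Pi_pmf A False (\<lambda>j. bernoulli_pmf (b (\<pi> j))) = map_pmf (\<lambda>h. (snd \<circ> h) \<circ> \<pi>) P"
  proof -
    have "Pi_pmf A False (\<lambda>j. bernoulli_pmf (b (\<pi> j))) = map_pmf (\<lambda>g. g \<circ> \<pi>) (Pi_pmf A False (\<lambda>i. bernoulli_pmf (b i)))"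
      using Pi_pmf_bij_betw_gen[OF fin bij out, of False "\<lambda>i. bernoulli_pmf (b i)"] by simp
    also have "Pi_pmf A False (\<lambda>i. bernoulli_pmf (b i)) = Pi_pmf A False (\<lambda>i. map_pmf snd (K i))"
      using ab by (intro Pi_pmf_cong) (auto simp: K_def Kc_snd)
    also have "\<dots> = map_pmf (\<lambda>h. snd \<circ> h) P"
      unfolding P_def by (rule Pi_pmf_map) (auto simp: fin)
    finally show ?thesis by (simp add: pmf.map_comp o_def)
  qed
  have "measure_pmf.prob P {h. c \<le> F (fst \<circ> h)} \<le> measure_pmf.prob P {h. c \<le> G ((snd \<circ> h) \<circ> \<pi>)}"
  proof (rule measure_pmf.finite_measure_mono_AE)
    show "AE h in measure_pmf P. h \<in> {h. c \<le> F (fst \<circ> h)} \<longrightarrow> h \<in> {h. c \<le> G ((snd \<circ> h) \<circ> \<pi>)}"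
      unfolding AE_measure_pmf_iff
    proof (intro ballI impI)
      fix h assume hP: "h \<in> set_pmf P" and "h \<in> {h. c \<le> F (fst \<circ> h)}"
      hence c: "c \<le> F (fst \<circ> h)" by simp
      have hK: "h i \<in> set_pmf (K i)" if "i \<in> A" for i
        using hP that unfolding P_def set_Pi_pmf[OF fin] PiE_dflt_def by auto
      have "\<forall>i\<in>A. ((fst \<circ> h) i = hs i \<longrightarrow> (snd \<circ> h) i) \<and> (b i = 1 \<longrightarrow> (snd \<circ> h) i)"
      proof
        fix i assume i: "i \<in> A"
        have "(fst (h i), snd (h i)) \<in> set_pmf (Kc (hs i) (a i) (b i))" using hK[OF i] by (simp add: K_def)
        thus "((fst \<circ> h) i = hs i \<longrightarrow> (snd \<circ> h) i) \<and> (b i = 1 \<longrightarrow> (snd \<circ> h) i)"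
          using Kc_set Kc_set2 ab[OF i] by (metis comp_apply)
      qed
      from FG[OF this] c show "h \<in> {h. c \<le> G ((snd \<circ> h) \<circ> \<pi>)}" by (simp add: o_def)
    qed
  qed simp
  thus ?thesis unfolding 1 2 by simp
qed


lemma perm_exists:
  fixes \<sigma> :: "nat \<Rightarrow> nat" and d :: "nat \<Rightarrow> real" and B :: "nat set"
  assumes sb: "bij_betw \<sigma> {..<I} {..<I}"
    and so: "\<forall>a b. a \<le> b \<and> b < I \<longrightarrow> d (\<sigma> a) \<le> d (\<sigma> b)"
    and BA: "B \<subseteq> {..<I}" and cB: "card B = k" and kI: "k \<le> I"
  shows "\<exists>\<pi>. bij_betw \<pi> {..<I} {..<I} \<and> (\<forall>x. x \<notin> {..<I} \<longrightarrow> \<pi> x = x)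
     \<and> (\<forall>j<I. \<pi> j \<in> B \<longleftrightarrow> j \<in> \<sigma> ` {..<k}) \<and> (\<forall>j \<in> \<sigma> ` {..<k}. d j \<le> d (\<pi> j))"
proof -
  define A where "A = {..<I::nat}"
  define Ik where "Ik = \<sigma> ` {..<k}"
  define \<sigma>' where "\<sigma>' = the_inv_into A \<sigma>"
  have inj: "inj_on \<sigma> A" using sb by (simp add: A_def bij_betw_def)
  have \<sigma>'\<sigma>: "\<sigma>' (\<sigma> a) = a" if "a \<in> A" for a
    unfolding \<sigma>'_def using inj that by (simp add: the_inv_into_f_f)
  have \<sigma>A: "\<sigma> a \<in> A" if "a \<in> A" for a using sb that by (auto simp: A_def bij_betw_def)
  have IkA: "Ik \<subseteq> A" using kI \<sigma>A by (auto simp: Ik_def A_def)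
  define S where "S = \<sigma>' ` B"
  have \<sigma>S: "\<sigma> ` S = B"
  proof -
    have "\<sigma> (\<sigma>' b) = b" if "b \<in> B" for b
      using that BA sb unfolding \<sigma>'_def A_def by (meson f_the_inv_into_f_bij_betw subsetD)
    thus ?thesis unfolding S_def by force
  qed
  have SA: "S \<subseteq> A"
  proof
    fix x assume "x \<in> S"
    then obtain b where b: "b \<in> B" "x = \<sigma>' b" by (auto simp: S_def)
    have "b \<in> \<sigma> ` A" using sb b BA by (auto simp: A_def bij_betw_def)
    thus "x \<in> A" using b \<sigma>'\<sigma> by auto
  qed
  have finS: "finite S" using SA by (auto simp: A_def intro: finite_subset)
  have cS: "card S = k"
  proof -
    have "card (\<sigma> ` S) = card S" using inj SA by (intro card_image) (auto intro: inj_on_subset)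
    thus ?thesis using \<sigma>S cB by simp
  qed
  define s where "s = sorted_list_of_set S"
  have ls: "length s = k" using cS by (simp add: s_def)
  have ss: "sorted_wrt (<) s" by (simp add: s_def strict_sorted_list_of_set)
  have ds: "distinct s" by (simp add: s_def)
  have sset: "set s = S" using finS by (simp add: s_def)
  have snth: "s ! a \<in> S" if "a < k" for a using that ls sset nth_mem by blast
  define f where "f x = \<sigma> (s ! \<sigma>' x)" for x
  have fIk: "f (\<sigma> a) = \<sigma> (s ! a)" if "a < k" for a
    using that kI \<sigma>'\<sigma> by (auto simp: f_def A_def)
  have bf: "bij_betw f Ik B"
  proof (rule bij_betw_imageI)
    show "inj_on f Ik"
    proof (rule inj_onI)
      fix x y assume "x \<in> Ik" "y \<in> Ik" "f x = f y"
      then obtain a b where ab: "a < k" "b < k" "x = \<sigma> a" "y = \<sigma> b" by (auto simp: Ik_def)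
      hence "\<sigma> (s ! a) = \<sigma> (s ! b)" using fIk \<open>f x = f y\<close> by simp
      hence "s ! a = s ! b" using inj snth ab SA by (meson inj_onD subsetD)
      hence "a = b" using ds ab ls by (simp add: nth_eq_iff_index_eq)
      thus "x = y" using ab by simp
    qed
    show "f ` Ik = B"
    proof -
      have "f ` Ik = (\<lambda>a. \<sigma> (s ! a)) ` {..<k}" unfolding Ik_def image_image using fIk
        by (intro image_cong) auto
      also have "\<dots> = \<sigma> ` ((\<lambda>a. s ! a) ` {..<k})" by (simp add: image_image)
      also have "(\<lambda>a. s ! a) ` {..<k} = set s" using ls by (auto simp: in_set_conv_nth)
      finally show ?thesis using sset \<sigma>S by simp
    qed
  qed
  have cIk: "card Ik = k"
    unfolding Ik_def using inj kI by (subst card_image) (auto simp: A_def intro: inj_on_subset)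
  obtain g where bg: "bij_betw g (A - Ik) (A - B)"
  proof -
    have "card (A - Ik) = card (A - B)"
      using IkA BA cIk cB by (simp add: card_Diff_subset A_def finite_subset)
    thus ?thesis using finite_same_card_bij[of "A - Ik" "A - B"] that by (auto simp: A_def)
  qed
  define \<pi> where "\<pi> x = (if x \<in> Ik then f x else if x \<in> A then g x else x)" for x
  have b1: "bij_betw \<pi> Ik B" using bf by (rule bij_betw_cong[THEN iffD1, rotated]) (auto simp: \<pi>_def)
  have b2: "bij_betw \<pi> (A - Ik) (A - B)" using bg by (rule bij_betw_cong[THEN iffD1, rotated]) (auto simp: \<pi>_def)
  have "bij_betw \<pi> (Ik \<union> (A - Ik)) (B \<union> (A - B))" by (rule bij_betw_combine[OF b1 b2]) auto
  moreover have "Ik \<union> (A - Ik) = A" "B \<union> (A - B) = A" using IkA BA by (auto simp: A_def)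
  ultimately have bp: "bij_betw \<pi> A A" by simp
  have p1: "\<forall>j<I. \<pi> j \<in> B \<longleftrightarrow> j \<in> Ik"
  proof (intro allI impI)
    fix j assume "j < I"
    show "\<pi> j \<in> B \<longleftrightarrow> j \<in> Ik"
    proof (cases "j \<in> Ik")
      case True thus ?thesis using b1 by (auto simp: bij_betw_def)
    next
      case False
      hence "\<pi> j \<in> A - B" using b2 \<open>j < I\<close> by (auto simp: bij_betw_def A_def)
      thus ?thesis using False by auto
    qed
  qed
  have p2: "\<forall>j \<in> Ik. d j \<le> d (\<pi> j)"
  proof
    fix j assume "j \<in> Ik"
    then obtain a where a: "a < k" "j = \<sigma> a" by (auto simp: Ik_def)
    have "\<pi> j = \<sigma> (s ! a)" using a \<open>j \<in> Ik\<close> fIk by (simp add: \<pi>_def)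
    moreover have "a \<le> s ! a" using sorted_wrt_less_idx[OF ss] a ls by simp
    moreover have "s ! a < I" using snth[OF a(1)] SA by (auto simp: A_def)
    ultimately show "d j \<le> d (\<pi> j)" using so a by simp
  qed
  have p3: "\<forall>x. x \<notin> {..<I} \<longrightarrow> \<pi> x = x" using IkA by (auto simp: \<pi>_def A_def)
  show ?thesis
    using bp p1 p2 p3 unfolding A_def Ik_def by blast
qed


definition Mx :: "(nat \<Rightarrow> bool \<Rightarrow> real) \<Rightarrow> nat \<Rightarrow> real" where
  "Mx q i = max (q i True) (q i False)"
definition dd :: "(nat \<Rightarrow> bool \<Rightarrow> real) \<Rightarrow> nat \<Rightarrow> real" where
  "dd q i = \<bar>q i True - q i False\<bar>"
definition tb :: "nat \<Rightarrow> (nat \<Rightarrow> bool \<Rightarrow> real) \<Rightarrow> (nat \<Rightarrow> bool) \<Rightarrow> real" where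
  "tb I q w = (\<Sum>i<I. if w i then max (q i True) (q i False) else min (q i True) (q i False))"

lemma pbar_eq:
  "k \<noteq> 0 \<Longrightarrow> pbar I q \<sigma> \<Gamma> k c =
     measure_pmf.prob (Pi_pmf {..<I} False (\<lambda>i. bernoulli_pmf (if i \<in> Ik \<sigma> k then gprob \<Gamma> else 1)))
       {w. c \<le> tb I q w}"
  by (simp add: pbar_def Tbar_dist_def tb_def vimage_def)

lemma gprob_range: "1 \<le> \<Gamma> \<Longrightarrow> 0 \<le> gprob \<Gamma> \<and> gprob \<Gamma> \<le> 1"
  by (cases \<Gamma>) (auto simp: gprob_def)

lemma gprob_mono: "1 \<le> \<Gamma> \<Longrightarrow> \<Gamma> \<le> \<Gamma>' \<Longrightarrow> gprob \<Gamma> \<le> gprob \<Gamma>'"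
proof (cases \<Gamma>')
  case (real r')
  assume a: "1 \<le> \<Gamma>" "\<Gamma> \<le> \<Gamma>'"
  then obtain r where r: "\<Gamma> = ereal r" using real by (cases \<Gamma>) auto
  have "1 \<le> r" "r \<le> r'" using a r real by auto
  hence "r / (1 + r) \<le> r' / (1 + r')" by (simp add: field_simps)
  thus ?thesis using r real by (simp add: gprob_def)
next
  case PInf
  assume a: "1 \<le> \<Gamma>" "\<Gamma> \<le> \<Gamma>'"
  thus ?thesis using PInf gprob_range[OF a(1)] by (simp add: gprob_def)
next
  case MInf
  assume a: "1 \<le> \<Gamma>" "\<Gamma> \<le> \<Gamma>'"
  thus ?thesis using MInf by simp
qed

lemma Gamma_star_ge1:
  assumes "0 \<le> p i" "p i \<le> 1"
  shows "1 \<le> Gamma_star p i"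
proof (cases "min (p i) (1 - p i) = 0")
  case True thus ?thesis by (simp add: Gamma_star_def Let_def)
next
  case False
  hence "0 < min (p i) (1 - p i)" using assms by auto
  hence "1 \<le> max (p i) (1 - p i) / min (p i) (1 - p i)" by (simp add: field_simps)
  thus ?thesis using False by (simp add: Gamma_star_def Let_def)
qed

lemma Gamma_star_bound:
  assumes "0 \<le> p i" "p i \<le> 1" "1 \<le> \<gamma>" "Gamma_star p i \<le> \<gamma>"
  shows "max (p i) (1 - p i) \<le> gprob \<gamma>"
proof (cases \<gamma>)
  case PInf thus ?thesis using assms by (simp add: gprob_def)
next
  case MInf thus ?thesis using assms by simp
next
  case (real g)
  have ne: "min (p i) (1 - p i) \<noteq> 0"
  proof
    assume "min (p i) (1 - p i) = 0"
    hence "Gamma_star p i = \<infinity>" by (simp add: Gamma_star_def Let_def)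
    thus False using assms real by simp
  qed
  define M where "M = max (p i) (1 - p i)"
  define m where "m = min (p i) (1 - p i)"
  have m0: "0 < m" using ne assms by (auto simp: m_def)
  have Mm: "M + m = 1" by (auto simp: M_def m_def)
  have "ereal (M / m) \<le> ereal g" using assms real ne by (simp add: Gamma_star_def Let_def M_def m_def)
  hence "M / m \<le> g" by simp
  hence "M \<le> g * m" using m0 by (simp add: field_simps)
  moreover have "m = 1 - M" using Mm by simp
  ultimately have "M \<le> g * (1 - M)" by simp
  hence "M * (1 + g) \<le> g" by (simp add: algebra_simps)
  moreover have "1 \<le> g" using assms real by simp
  ultimately have "M \<le> g / (1 + g)" by (simp add: field_simps)
  thus ?thesis using real by (simp add: gprob_def M_def)
qed

lemma tb_mono: "(\<forall>i<I. x i \<longrightarrow> y i) \<Longrightarrow> tb I q x \<le> tb I q y"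
  unfolding tb_def by (intro sum_mono) auto

lemma pbar_mono_Gamma:
  assumes "1 \<le> \<Gamma>" "\<Gamma> \<le> \<Gamma>'"
  shows "pbar I q \<sigma> \<Gamma> k c \<le> pbar I q \<sigma> \<Gamma>' k c"
proof (cases "k = 0")
  case True thus ?thesis by (simp add: pbar_def)
next
  case False
  have g1: "0 \<le> gprob \<Gamma>" "gprob \<Gamma> \<le> gprob \<Gamma>'" "gprob \<Gamma>' \<le> 1"
    using gprob_range gprob_mono assms order_trans[OF assms] by auto
  have "measure_pmf.prob (Pi_pmf {..<I} False (\<lambda>i. bernoulli_pmf (if True then (if i \<in> Ik \<sigma> k then gprob \<Gamma> else 1) else 1 - (if i \<in> Ik \<sigma> k then gprob \<Gamma> else 1)))) {x. c \<le> tb I q x}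
       \<le> measure_pmf.prob (Pi_pmf {..<I} False (\<lambda>j. bernoulli_pmf ((\<lambda>i. if i \<in> Ik \<sigma> k then gprob \<Gamma>' else 1) (id j)))) {y. c \<le> tb I q y}"
    by (rule dom[where hs="\<lambda>_. True"]) (use g1 in \<open>auto intro: tb_mono simp: bij_betw_def\<close>)
  thus ?thesis using False by (simp add: pbar_eq)
qed

lemma pbar_le1: "pbar I q \<sigma> \<Gamma> k c \<le> 1"
  by (simp add: pbar_def)

lemma pbar_anti_k:
  assumes "1 \<le> \<Gamma>" "k \<le> k'"
  shows "pbar I q \<sigma> \<Gamma> k' c \<le> pbar I q \<sigma> \<Gamma> k c"
proof (cases "k = 0")
  case True thus ?thesis using pbar_le1 by (simp add: pbar_def)
next
  case False
  hence k': "k' \<noteq> 0" using assms by auto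
  have sub: "Ik \<sigma> k \<subseteq> Ik \<sigma> k'" using assms by (auto simp: Ik_def)
  have g1: "0 \<le> gprob \<Gamma>" "gprob \<Gamma> \<le> 1"
    using gprob_range assms by auto
  have "measure_pmf.prob (Pi_pmf {..<I} False (\<lambda>i. bernoulli_pmf (if True then (if i \<in> Ik \<sigma> k' then gprob \<Gamma> else 1) else 1 - (if i \<in> Ik \<sigma> k' then gprob \<Gamma> else 1)))) {x. c \<le> tb I q x}
       \<le> measure_pmf.prob (Pi_pmf {..<I} False (\<lambda>j. bernoulli_pmf ((\<lambda>i. if i \<in> Ik \<sigma> k then gprob \<Gamma> else 1) (id j)))) {y. c \<le> tb I q y}"
    by (rule dom[where hs="\<lambda>_. True"]) (use g1 sub in \<open>auto intro: tb_mono simp: bij_betw_def\<close>)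
  thus ?thesis using False k' by (simp add: pbar_eq)
qed


lemma q_decomp:
  "q i v = Mx q i - (if v = (q i False \<le> q i True) then 0 else dd q i)"
  by (cases v) (auto simp: Mx_def dd_def max_def)

lemma tb_decomp:
  "(if w then max (q i True) (q i False) else min (q i True) (q i False)) = Mx q i - (if w then 0 else dd q i)"
  by (auto simp: Mx_def dd_def max_def min_def)

lemma dominance:
  fixes I :: nat and p :: "nat \<Rightarrow> real" and q :: "nat \<Rightarrow> bool \<Rightarrow> real" and \<sigma> :: "nat \<Rightarrow> nat"
  assumes p_range: "\<forall>i<I. 0 \<le> p i \<and> p i \<le> 1"
    and \<sigma>_bij: "bij_betw \<sigma> {..<I} {..<I}"
    and \<sigma>_order: "\<forall>a b. a \<le> b \<and> b < I \<longrightarrow>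
                    \<bar>q (\<sigma> a) True - q (\<sigma> a) False\<bar> \<le> \<bar>q (\<sigma> b) True - q (\<sigma> b) False\<bar>"
    and g1: "1 \<le> \<gamma>" and k1: "1 \<le> k" and kI: "k \<le> I"
    and BA: "B \<subseteq> {..<I}" and cB: "card B = k" and Bg: "\<forall>i\<in>B. Gamma_star p i \<le> \<gamma>"
  shows "measure_pmf.prob (Zdist I p) {z. c \<le> Tstat I q z} \<le> pbar I q \<sigma> \<gamma> k c"
proof -
  have so: "\<forall>a b. a \<le> b \<and> b < I \<longrightarrow> dd q (\<sigma> a) \<le> dd q (\<sigma> b)"
    using \<sigma>_order by (simp add: dd_def)
  obtain \<pi> where pb: "bij_betw \<pi> {..<I} {..<I}" and pout: "\<forall>x. x \<notin> {..<I} \<longrightarrow> \<pi> x = x"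
    and p1: "\<forall>j<I. \<pi> j \<in> B \<longleftrightarrow> j \<in> \<sigma> ` {..<k}" and p2: "\<forall>j \<in> \<sigma> ` {..<k}. dd q j \<le> dd q (\<pi> j)"
    using perm_exists[OF \<sigma>_bij so BA cB kI] by blast
  define hi where "hi i = (q i False \<le> q i True)" for i
  define a where "a i = (if hi i then p i else 1 - p i)" for i
  define b where "b i = (if i \<in> B then gprob \<gamma> else 1)" for i
  have gr: "0 \<le> gprob \<gamma>" "gprob \<gamma> \<le> 1" using gprob_range[OF g1] by auto
  have ab: "0 \<le> a i \<and> a i \<le> b i \<and> b i \<le> 1" if "i \<in> {..<I}" for i
  proof -
    have pi: "0 \<le> p i" "p i \<le> 1" using p_range that by auto
    have "a i \<le> max (p i) (1 - p i)" by (auto simp: a_def)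
    moreover have "i \<in> B \<Longrightarrow> max (p i) (1 - p i) \<le> gprob \<gamma>"
      using Gamma_star_bound[of p i, OF pi g1] Bg by auto
    ultimately show ?thesis using pi gr by (auto simp: a_def b_def)
  qed
  have FG: "Tstat I q x \<le> tb I q (y \<circ> \<pi>)"
    if H: "\<forall>i\<in>{..<I}. (x i = hi i \<longrightarrow> y i) \<and> (b i = 1 \<longrightarrow> y i)" for x y
  proof -
    define e where "e i = (if x i = hi i then 0 else dd q i)" for i
    define f where "f j = (if y (\<pi> j) then 0 else dd q j)" for j
    have "Tstat I q x = (\<Sum>i<I. Mx q i - e i)"
      unfolding Tstat_def e_def hi_def by (intro sum.cong refl) (rule q_decomp)
    also have "\<dots> = (\<Sum>i<I. Mx q i) - (\<Sum>i<I. e i)" by (simp add: sum_subtractf)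
    also have "(\<Sum>i<I. e i) = (\<Sum>j<I. e (\<pi> j))" using sum.reindex_bij_betw[OF pb, of e] by simp
    also have "(\<Sum>j<I. f j) \<le> (\<Sum>j<I. e (\<pi> j))"
    proof (rule sum_mono)
      fix j assume j: "j \<in> {..<I}"
      have pj: "\<pi> j \<in> {..<I}" using pb j by (auto simp: bij_betw_def)
      show "f j \<le> e (\<pi> j)"
      proof (cases "y (\<pi> j)")
        case True thus ?thesis by (simp add: f_def e_def dd_def)
      next
        case False
        hence "b (\<pi> j) \<noteq> 1" "x (\<pi> j) \<noteq> hi (\<pi> j)" using H pj by auto
        hence "\<pi> j \<in> B" by (auto simp: b_def split: if_splits)
        hence "j \<in> \<sigma> ` {..<k}" using p1 j by auto
        hence "dd q j \<le> dd q (\<pi> j)" using p2 by auto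
        thus ?thesis using False \<open>x (\<pi> j) \<noteq> hi (\<pi> j)\<close> by (simp add: f_def e_def)
      qed
    qed
    hence "(\<Sum>i<I. Mx q i) - (\<Sum>j<I. e (\<pi> j)) \<le> (\<Sum>i<I. Mx q i) - (\<Sum>j<I. f j)" by simp
    also have "\<dots> = (\<Sum>j<I. Mx q j - f j)" by (simp add: sum_subtractf)
    also have "\<dots> = tb I q (y \<circ> \<pi>)"
      unfolding tb_def f_def by (intro sum.cong refl) (simp add: tb_decomp)
    finally show ?thesis .
  qed
  have D: "measure_pmf.prob (Pi_pmf {..<I} False (\<lambda>i. bernoulli_pmf (if hi i then a i else 1 - a i))) {x. c \<le> Tstat I q x}
       \<le> measure_pmf.prob (Pi_pmf {..<I} False (\<lambda>j. bernoulli_pmf (b (\<pi> j)))) {y. c \<le> tb I q y}"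
    by (rule dom[OF _ pb]) (use ab FG pout in auto)
  have L: "Pi_pmf {..<I} False (\<lambda>i. bernoulli_pmf (if hi i then a i else 1 - a i)) = Zdist I p"
    unfolding Zdist_def by (intro Pi_pmf_cong) (auto simp: a_def)
  have R: "Pi_pmf {..<I} False (\<lambda>j. bernoulli_pmf (b (\<pi> j))) =
           Pi_pmf {..<I} False (\<lambda>i. bernoulli_pmf (if i \<in> Ik \<sigma> k then gprob \<gamma> else 1))"
    using p1 by (intro Pi_pmf_cong) (auto simp: b_def Ik_def)
  show ?thesis using D k1 unfolding L R by (simp add: pbar_eq)
qed

lemma survival:
  fixes Z :: "(nat \<Rightarrow> bool) pmf" and T :: "(nat \<Rightarrow> bool) \<Rightarrow> real" and G :: "real \<Rightarrow> real"
  assumes fin: "finite (set_pmf Z)" and dom: "\<And>c. measure_pmf.prob Z {z. c \<le> T z} \<le> G c"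
  shows "measure_pmf.prob Z {z. G (T z) \<le> \<alpha>} \<le> \<alpha> \<or> measure_pmf.prob Z {z. G (T z) \<le> \<alpha>} = 0"
proof -
  define D where "D = T ` (set_pmf Z \<inter> {z. G (T z) \<le> \<alpha>})"
  show ?thesis
  proof (cases "D = {}")
    case True
    hence "set_pmf Z \<inter> {z. G (T z) \<le> \<alpha>} = {}" by (auto simp: D_def)
    thus ?thesis by (simp add: measure_pmf_zero_iff)
  next
    case False
    have fD: "finite D" using fin by (simp add: D_def)
    define t0 where "t0 = Min D"
    have t0D: "t0 \<in> D" using False fD by (simp add: t0_def)
    hence Gt0: "G t0 \<le> \<alpha>" by (auto simp: D_def)
    have "measure_pmf.prob Z {z. G (T z) \<le> \<alpha>} \<le> measure_pmf.prob Z {z. t0 \<le> T z}"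
    proof (rule measure_pmf.finite_measure_mono_AE)
      show "AE z in measure_pmf Z. z \<in> {z. G (T z) \<le> \<alpha>} \<longrightarrow> z \<in> {z. t0 \<le> T z}"
        unfolding AE_measure_pmf_iff using fD by (auto simp: t0_def D_def)
    qed simp
    also have "\<dots> \<le> G t0" by (rule dom)
    finally show ?thesis using Gt0 by simp
  qed
qed

lemma finite_Zdist: "finite (set_pmf (Zdist I p))"
proof -
  have "set_pmf (Zdist I p) \<subseteq> PiE_dflt {..<I} False (\<lambda>_. UNIV)"
    unfolding Zdist_def by (rule order_trans[OF set_Pi_pmf_subset']) (auto simp: PiE_dflt_def)
  moreover have "finite (PiE_dflt {..<I} False (\<lambda>_. (UNIV :: bool set)))" by auto
  ultimately show ?thesis by (rule finite_subset)
qed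

lemma cover:
  fixes I :: nat and p :: "nat \<Rightarrow> real" and q :: "nat \<Rightarrow> bool \<Rightarrow> real" and \<sigma> :: "nat \<Rightarrow> nat"
  assumes p_range: "\<forall>i<I. 0 \<le> p i \<and> p i \<le> 1"
    and \<sigma>_bij: "bij_betw \<sigma> {..<I} {..<I}"
    and \<sigma>_order: "\<forall>a b. a \<le> b \<and> b < I \<longrightarrow>
                    \<bar>q (\<sigma> a) True - q (\<sigma> a) False\<bar> \<le> \<bar>q (\<sigma> b) True - q (\<sigma> b) False\<bar>"
    and g1: "1 \<le> \<gamma>" and k1: "1 \<le> k" and kI: "k \<le> I"
    and BA: "B \<subseteq> {..<I}" and cB: "card B = k" and Bg: "\<forall>i\<in>B. Gamma_star p i \<le> \<gamma>"
    and \<alpha>0: "0 < \<alpha>"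
  shows "measure_pmf.prob (Zdist I p) {z. \<alpha> < pbar I q \<sigma> \<gamma> k (Tstat I q z)} \<ge> 1 - \<alpha>"
proof -
  have s: "measure_pmf.prob (Zdist I p) {z. pbar I q \<sigma> \<gamma> k (Tstat I q z) \<le> \<alpha>} \<le> \<alpha>"
    using survival[OF finite_Zdist dominance[OF assms(1-9)], of \<alpha>] \<alpha>0 by auto
  have "{z. \<alpha> < pbar I q \<sigma> \<gamma> k (Tstat I q z)} = UNIV - {z. pbar I q \<sigma> \<gamma> k (Tstat I q z) \<le> \<alpha>}"
    by auto
  hence "measure_pmf.prob (Zdist I p) {z. \<alpha> < pbar I q \<sigma> \<gamma> k (Tstat I q z)}
       = 1 - measure_pmf.prob (Zdist I p) {z. pbar I q \<sigma> \<gamma> k (Tstat I q z) \<le> \<alpha>}"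
    using measure_pmf.prob_compl[of "{z. pbar I q \<sigma> \<gamma> k (Tstat I q z) \<le> \<alpha>}" "Zdist I p"] by simp
  thus ?thesis using s by simp
qed


lemma order_facts:
  assumes p_range: "\<forall>i<I. 0 \<le> p i \<and> p i \<le> 1" and k1: "1 \<le> k" and kI: "k \<le> I"
  shows "1 \<le> Gamma_order I p k \<and> k \<le> card {i \<in> {..<I}. Gamma_star p i \<le> Gamma_order I p k}"
proof -
  define L where "L = map (Gamma_star p) [0..<I]"
  define s where "s = sort L"
  define v where "v = s ! (k - 1)"
  have v: "Gamma_order I p k = v" by (simp add: Gamma_order_def v_def s_def L_def)
  have ls: "length s = I" by (simp add: s_def L_def)
  have "v \<in> set s" using ls k1 kI by (simp add: v_def)
  hence "v \<in> set L" by (simp add: s_def)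
  then obtain i where "i < I" "v = Gamma_star p i" by (auto simp: L_def)
  hence v1: "1 \<le> v" using Gamma_star_ge1[of p i] p_range by auto
  have "card {i \<in> {..<I}. Gamma_star p i \<le> v} = length (filter (\<lambda>x. x \<le> v) L)"
    unfolding length_filter_conv_card by (intro arg_cong[where f=card]) (auto simp: L_def)
  also have "\<dots> = length (filter (\<lambda>x. x \<le> v) s)"
    by (metis mset_filter mset_sort size_mset s_def)
  also have "\<dots> = card {i. i < I \<and> s ! i \<le> v}" by (simp add: length_filter_conv_card ls)
  finally have c: "card {i \<in> {..<I}. Gamma_star p i \<le> v} = card {i. i < I \<and> s ! i \<le> v}" .
  have "{..<k} \<subseteq> {i. i < I \<and> s ! i \<le> v}"
  proof
    fix i assume "i \<in> {..<k}"
    hence "i \<le> k - 1" "k - 1 < length s" using ls k1 kI by auto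
    hence "s ! i \<le> v" unfolding v_def by (intro sorted_nth_mono) (auto simp: s_def)
    thus "i \<in> {i. i < I \<and> s ! i \<le> v}" using \<open>i \<in> {..<k}\<close> kI by auto
  qed
  hence "k \<le> card {i. i < I \<and> s ! i \<le> v}" by (metis card_lessThan card_mono finite_Collect_conjI finite_lessThan lessThan_def)
  thus ?thesis using v v1 c by simp
qed

lemma upset_cases:
  fixes S :: "ereal set"
  assumes up: "\<And>x y. x \<in> S \<Longrightarrow> x \<le> y \<Longrightarrow> y \<in> S" and S1: "\<And>x. x \<in> S \<Longrightarrow> 1 \<le> x"
  shows "S = {x. 1 \<le> x \<and> Inf S < x} \<or> S = {x. 1 \<le> x \<and> Inf S \<le> x}"
proof (cases "Inf S \<in> S")
  case True
  have "S = {x. 1 \<le> x \<and> Inf S \<le> x}"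
    using True up S1 by (auto intro: Inf_lower)
  thus ?thesis ..
next
  case False
  have "S = {x. 1 \<le> x \<and> Inf S < x}"
  proof safe
    fix x assume "x \<in> S"
    thus "1 \<le> x" by (rule S1)
    show "Inf S < x" using \<open>x \<in> S\<close> False Inf_lower[OF \<open>x \<in> S\<close>] by (metis order_le_less)
  next
    fix x assume "Inf S < x"
    then obtain y where "y \<in> S" "y < x" by (auto simp: Inf_less_iff)
    thus "x \<in> S" using up by auto
  qed
  thus ?thesis ..
qed


theorem corollary3:
  fixes I :: nat
    and p :: "nat \<Rightarrow> real"
    and Y1 Y0 :: "nat \<Rightarrow> bool \<Rightarrow> real"
    and Q :: "(nat \<Rightarrow> bool \<Rightarrow> real) \<Rightarrow> nat \<Rightarrow> bool \<Rightarrow> real"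
    and q :: "nat \<Rightarrow> bool \<Rightarrow> real"
    and \<sigma> :: "nat \<Rightarrow> nat"
    and \<alpha> :: real
  assumes p_range: "\<forall>i<I. 0 \<le> p i \<and> p i \<le> 1"
    and fisher_null: "\<forall>i<I. \<forall>j. Y1 i j = Y0 i j"
    and q_def: "q = Q Y0"
    and \<sigma>_bij: "bij_betw \<sigma> {..<I} {..<I}"
    and \<sigma>_order: "\<forall>a b. a \<le> b \<and> b < I \<longrightarrow>
                    \<bar>q (\<sigma> a) True - q (\<sigma> a) False\<bar> \<le> \<bar>q (\<sigma> b) True - q (\<sigma> b) False\<bar>"
    and \<alpha>_range: "0 < \<alpha>" "\<alpha> < 1"
  shows
    "(\<forall>k. 1 \<le> k \<and> k \<le> I \<longrightarrow>
        measure_pmf.prob (Zdist I p) {z. Gamma_order I p k \<in> CS_Gamma I q \<sigma> \<alpha> k z} \<ge> 1 - \<alpha>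
      \<and> (\<forall>z. CS_Gamma I q \<sigma> \<alpha> k z = {\<Gamma>0. 1 \<le> \<Gamma>0 \<and> Gamma_hat I q \<sigma> \<alpha> k z < \<Gamma>0}
            \<or> CS_Gamma I q \<sigma> \<alpha> k z = {\<Gamma>0. 1 \<le> \<Gamma>0 \<and> Gamma_hat I q \<sigma> \<alpha> k z \<le> \<Gamma>0}))
   \<and> (\<forall>\<Gamma>0. 1 \<le> \<Gamma>0 \<longrightarrow>
        measure_pmf.prob (Zdist I p) {z. Istar I p \<Gamma>0 \<in> CS_I I q \<sigma> \<alpha> \<Gamma>0 z} \<ge> 1 - \<alpha>
      \<and> (\<forall>z. CS_I I q \<sigma> \<alpha> \<Gamma>0 z = {I_hat I q \<sigma> \<alpha> \<Gamma>0 z..I}))"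
proof (intro conjI allI impI)
  fix k assume k: "1 \<le> k \<and> k \<le> I"
  define \<gamma> where "\<gamma> = Gamma_order I p k"
  have of: "1 \<le> \<gamma> \<and> k \<le> card {i \<in> {..<I}. Gamma_star p i \<le> \<gamma>}"
    using order_facts[OF p_range] k by (simp add: \<gamma>_def)
  then obtain B where B: "B \<subseteq> {i \<in> {..<I}. Gamma_star p i \<le> \<gamma>}" "card B = k"
    by (meson obtain_subset_with_card_n)
  have cov: "measure_pmf.prob (Zdist I p) {z. \<alpha> < pbar I q \<sigma> \<gamma> k (Tstat I q z)} \<ge> 1 - \<alpha>"
    by (rule cover[OF p_range \<sigma>_bij \<sigma>_order _ _ _ _ B(2)]) (use of k B \<alpha>_range in auto)
  have "{z. Gamma_order I p k \<in> CS_Gamma I q \<sigma> \<alpha> k z} = {z. \<alpha> < pbar I q \<sigma> \<gamma> k (Tstat I q z)}"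
    using of by (auto simp: CS_Gamma_def \<gamma>_def)
  thus "measure_pmf.prob (Zdist I p) {z. Gamma_order I p k \<in> CS_Gamma I q \<sigma> \<alpha> k z} \<ge> 1 - \<alpha>"
    using cov by simp
next
  fix k z assume k: "1 \<le> k \<and> k \<le> I"
  have "CS_Gamma I q \<sigma> \<alpha> k z = {x. 1 \<le> x \<and> Inf (CS_Gamma I q \<sigma> \<alpha> k z) < x}
        \<or> CS_Gamma I q \<sigma> \<alpha> k z = {x. 1 \<le> x \<and> Inf (CS_Gamma I q \<sigma> \<alpha> k z) \<le> x}"
  proof (rule upset_cases)
    fix x y assume "x \<in> CS_Gamma I q \<sigma> \<alpha> k z" "x \<le> y"
    thus "y \<in> CS_Gamma I q \<sigma> \<alpha> k z"
      using pbar_mono_Gamma[of x y I q \<sigma> k "Tstat I q z"] by (auto simp: CS_Gamma_def)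
  qed (auto simp: CS_Gamma_def)
  thus "CS_Gamma I q \<sigma> \<alpha> k z = {\<Gamma>0. 1 \<le> \<Gamma>0 \<and> Gamma_hat I q \<sigma> \<alpha> k z < \<Gamma>0}
            \<or> CS_Gamma I q \<sigma> \<alpha> k z = {\<Gamma>0. 1 \<le> \<Gamma>0 \<and> Gamma_hat I q \<sigma> \<alpha> k z \<le> \<Gamma>0}"
    by (simp add: Gamma_hat_def CS_Gamma_def)
next
  fix \<Gamma>0 :: ereal assume g: "1 \<le> \<Gamma>0"
  define B where "B = {i \<in> {..<I}. Gamma_star p i \<le> \<Gamma>0}"
  define ks where "ks = I - Istar I p \<Gamma>0"
  have cI: "Istar I p \<Gamma>0 = card ({..<I} - B)"
    unfolding Istar_def B_def by (intro arg_cong[where f=card]) (auto simp: not_le)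
  have BA: "B \<subseteq> {..<I}" by (auto simp: B_def)
  have cBI: "card B \<le> I" using BA by (metis card_lessThan card_mono finite_lessThan)
  have cB: "card B = ks"
    using cI BA cBI by (simp add: ks_def card_Diff_subset finite_subset)
  have IsI: "Istar I p \<Gamma>0 \<le> I" using cI by (metis card_Diff_subset card_lessThan diff_le_self finite_subset BA finite_lessThan)
  show "measure_pmf.prob (Zdist I p) {z. Istar I p \<Gamma>0 \<in> CS_I I q \<sigma> \<alpha> \<Gamma>0 z} \<ge> 1 - \<alpha>"
  proof (cases "ks = 0")
    case True
    hence "Istar I p \<Gamma>0 = I - 0" using IsI by (simp add: ks_def)
    hence "{z. Istar I p \<Gamma>0 \<in> CS_I I q \<sigma> \<alpha> \<Gamma>0 z} = UNIV"
      using \<alpha>_range by (auto simp: CS_I_def pbar_def)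
    thus ?thesis using \<alpha>_range by simp
  next
    case False
    have cov: "measure_pmf.prob (Zdist I p) {z. \<alpha> < pbar I q \<sigma> \<Gamma>0 ks (Tstat I q z)} \<ge> 1 - \<alpha>"
      by (rule cover[OF p_range \<sigma>_bij \<sigma>_order g _ _ BA cB]) (use False \<alpha>_range in \<open>auto simp: ks_def B_def\<close>)
    have "{z. \<alpha> < pbar I q \<sigma> \<Gamma>0 ks (Tstat I q z)} \<subseteq> {z. Istar I p \<Gamma>0 \<in> CS_I I q \<sigma> \<alpha> \<Gamma>0 z}"
    proof
      fix z assume "z \<in> {z. \<alpha> < pbar I q \<sigma> \<Gamma>0 ks (Tstat I q z)}"
      moreover have "Istar I p \<Gamma>0 = I - ks" "ks \<le> I" using IsI by (auto simp: ks_def)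
      ultimately show "z \<in> {z. Istar I p \<Gamma>0 \<in> CS_I I q \<sigma> \<alpha> \<Gamma>0 z}"
        unfolding CS_I_def by blast
    qed
    hence "measure_pmf.prob (Zdist I p) {z. \<alpha> < pbar I q \<sigma> \<Gamma>0 ks (Tstat I q z)}
          \<le> measure_pmf.prob (Zdist I p) {z. Istar I p \<Gamma>0 \<in> CS_I I q \<sigma> \<alpha> \<Gamma>0 z}"
      by (intro measure_pmf.finite_measure_mono) auto
    thus ?thesis using cov by simp
  qed
next
  fix \<Gamma>0 :: ereal and z assume g: "1 \<le> \<Gamma>0"
  define Ks where "Ks = {k. k \<le> I \<and> \<alpha> < pbar I q \<sigma> \<Gamma>0 k (Tstat I q z)}"
  have fin: "finite Ks" by (auto simp: Ks_def)
  have ne: "0 \<in> Ks" using \<alpha>_range by (simp add: Ks_def pbar_def)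
  define K where "K = Sup Ks"
  have KM: "K = Max Ks" unfolding K_def using fin ne by (intro cSup_eq_Max) auto
  have KKs: "K \<in> Ks" using KM fin ne by (metis Max_in empty_iff)
  have Kle: "k \<le> K" if "k \<in> Ks" for k using KM fin that by simp
  have KI: "K \<le> I" using KKs by (simp add: Ks_def)
  have "CS_I I q \<sigma> \<alpha> \<Gamma>0 z = {I - K..I}"
  proof safe
    fix x assume "x \<in> CS_I I q \<sigma> \<alpha> \<Gamma>0 z"
    then obtain k where "x = I - k" "k \<in> Ks" by (auto simp: CS_I_def Ks_def)
    thus "x \<in> {I - K..I}" using Kle[of k] by auto
  next
    fix x assume x: "x \<in> {I - K..I}"
    define k where "k = I - x"
    have kK: "k \<le> K" using x KI by (auto simp: k_def)
    have "pbar I q \<sigma> \<Gamma>0 K (Tstat I q z) \<le> pbar I q \<sigma> \<Gamma>0 k (Tstat I q z)"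
      by (rule pbar_anti_k[OF g kK])
    hence "k \<in> Ks" using KKs kK KI by (auto simp: Ks_def)
    moreover have "x = I - k" using x by (auto simp: k_def)
    ultimately show "x \<in> CS_I I q \<sigma> \<alpha> \<Gamma>0 z" by (auto simp: CS_I_def Ks_def)
  qed
  thus "CS_I I q \<sigma> \<alpha> \<Gamma>0 z = {I_hat I q \<sigma> \<alpha> \<Gamma>0 z..I}"
    by (simp add: I_hat_def K_def Ks_def)
qed

end
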